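(* Under the standing setup below, as $n \to +\infty$, \[ a_{-n} u_n + a_{-n+1} u_{n+1} = \frac{\pi}{4} + O\!\left( \frac{1}{D_{n-1}^2} \right). \] In particular, $\lim_{n \to +\infty} \left( a_{-n} u_n + a_{-n+1} u_{n+1} \right) = \dfrac{\pi}{4}$.
   Context: Standing setup: $a_0, a_1 \in \mathbb{Z}$ and $u_0 > u_1 > 0$ are rational numbers with $a_0 \arctan u_0 + a_1 \arctan u_1 = \pi/4$. Let $\alpha := \arctan u_0 / \arctan u_1$ (which is $>1$ and irrational), with infinite simple continued fraction expansion $\alpha = [q_0; q_1, q_2, \dots]$, $q_i \in \mathbb{N}$. The numbers $u_n$ ($n \in \mathbb{N}_0$) are the positive reals with the given $u_0,u_1$ and $\arctan u_n = q_n \arctan u_{n+1} + \arctan u_{n+2}$ for all $n \in \mathbb{N}_0$. The integers $a_{-n}$ for $n \geq 1$ are defined recursively by $a_{-n-1} := q_n a_{-n} + a_{-n+1}$ for all $n \in \mathbb{N}_0$. The sequences $N_k, D_k$ ($k \ge -2$) are defined by $N_{-2}=0$, $N_{-1}=1$, $D_{-2}=1$, $D_{-1}=0$, and $N_k = q_k N_{k-1} + N_{k-2}$, $D_k = q_k D_{k-1} + D_{k-2}$ for $k \in \mathbb{N}_0$; thus $N_n/D_n = [q_0; q_1, \dots, q_n]$ in lowest terms for $n \ge 0$. *)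

theory Defs
  imports "HOL-Analysis.Analysis" "HOL-Library.Landau_Symbols"
begin

fun cf_rem :: "real \<Rightarrow> nat \<Rightarrow> real" where
  "cf_rem x 0 = x"
| "cf_rem x (Suc n) = 1 / (cf_rem x n - of_int \<lfloor>cf_rem x n\<rfloor>)"

definition cf_q :: "real \<Rightarrow> nat \<Rightarrow> nat" where
  "cf_q x n = nat \<lfloor>cf_rem x n\<rfloor>"

(* theta n = arctan u_n, with arctan u_n = q_n arctan u_{n+1} + arctan u_{n+2} *)
fun theta :: "real \<Rightarrow> real \<Rightarrow> (nat \<Rightarrow> nat) \<Rightarrow> nat \<Rightarrow> real" where
  "theta u0 u1 q 0 = arctan u0"
| "theta u0 u1 q (Suc 0) = arctan u1"
| "theta u0 u1 q (Suc (Suc n)) = theta u0 u1 q n - real (q n) * theta u0 u1 q (Suc n)"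

definition useq :: "real \<Rightarrow> real \<Rightarrow> (nat \<Rightarrow> nat) \<Rightarrow> nat \<Rightarrow> real" where
  "useq u0 u1 q n = tan (theta u0 u1 q n)"

(* aneg a0 a1 q k = a_{1-k}; so a_{-n} = aneg (n+1), a_{-n+1} = aneg n *)
fun aneg :: "int \<Rightarrow> int \<Rightarrow> (nat \<Rightarrow> nat) \<Rightarrow> nat \<Rightarrow> int" where
  "aneg a0 a1 q 0 = a1"
| "aneg a0 a1 q (Suc 0) = a0"
| "aneg a0 a1 q (Suc (Suc n)) = int (q n) * aneg a0 a1 q (Suc n) + aneg a0 a1 q n"

(* Dsh q k = D_{k-2}; so D_{-2} = Dsh 0 = 1, D_{-1} = Dsh 1 = 0, D_{n-1} = Dsh (n+1) *)
fun Dsh :: "(nat \<Rightarrow> nat) \<Rightarrow> nat \<Rightarrow> int" where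
  "Dsh q 0 = 1"
| "Dsh q (Suc 0) = 0"
| "Dsh q (Suc (Suc k)) = int (q k) * Dsh q (Suc k) + Dsh q k"

end

theory Submission imports Defs "HOL-Real_Asymp.Real_Asymp" begin
fun Nsh :: "(nat \<Rightarrow> nat) \<Rightarrow> nat \<Rightarrow> int" where
  "Nsh q 0 = 0"
| "Nsh q (Suc 0) = 1"
| "Nsh q (Suc (Suc k)) = int (q k) * Nsh q (Suc k) + Nsh q k"

lemma pair_inv:
  fixes x :: "nat \<Rightarrow> real"
  assumes "\<And>k. x (Suc (Suc k)) = real (q k) * x (Suc k) + x k"
  shows "x (Suc n) * theta u0 u1 q n + x n * theta u0 u1 q (Suc n)
         = x 1 * arctan u0 + x 0 * arctan u1"
proof (induction n)
  case 0 then show ?case by simp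
next
  case (Suc n)
  have "x (Suc (Suc n)) * theta u0 u1 q (Suc n) + x (Suc n) * theta u0 u1 q (Suc (Suc n))
      = x (Suc n) * theta u0 u1 q n + x n * theta u0 u1 q (Suc n)"
    by (simp add: assms algebra_simps)
  then show ?case using Suc by simp
qed

lemma aneg_decomp: "aneg a0 a1 q n = a1 * Dsh q n + a0 * Nsh q n \<and>
   aneg a0 a1 q (Suc n) = a1 * Dsh q (Suc n) + a0 * Nsh q (Suc n)"
  by (induction n) (auto simp: algebra_simps)

lemma Dsh_nonneg: "Dsh q n \<ge> 0 \<and> Dsh q (Suc n) \<ge> 0"
  by (induction n) auto

lemma Nsh_nonneg: "Nsh q n \<ge> 0 \<and> Nsh q (Suc n) \<ge> 0"
  by (induction n) auto

lemma Dsh_ge1: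
  assumes "\<And>k. k \<ge> 1 \<Longrightarrow> q k \<ge> 1"
  shows "Dsh q (Suc (Suc n)) \<ge> 1 \<and> Dsh q (Suc (Suc (Suc n))) \<ge> 1"
proof (induction n)
  case 0
  have "q 1 \<ge> 1" using assms by simp
  then show ?case by simp
next
  case (Suc n)
  have e: "Dsh q (Suc (Suc (Suc (Suc n)))) = int (q (Suc (Suc n))) * Dsh q (Suc (Suc (Suc n))) + Dsh q (Suc (Suc n))"
    by (simp only: Dsh.simps)
  have h1: "Dsh q (Suc (Suc (Suc n))) \<ge> 1" "Dsh q (Suc (Suc n)) \<ge> 1" using Suc.IH by blast+
  have m: "int (q (Suc (Suc n))) * Dsh q (Suc (Suc (Suc n))) \<ge> 0"
    using h1 by simp
  have h2: "Dsh q (Suc (Suc (Suc (Suc n)))) \<ge> 1" using e m h1 by linarith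
  show ?case using h1 h2 by blast
qed

lemma Dsh_lin:
  assumes "\<And>k. k \<ge> 1 \<Longrightarrow> q k \<ge> 1"
  shows "int n \<le> 2 * Dsh q (Suc n) + 1 \<and> int (Suc n) \<le> 2 * Dsh q (Suc (Suc n)) + 1"
proof (induction n)
  case 0 then show ?case by simp
next
  case (Suc n)
  have q1: "int (q (Suc n)) \<ge> 1" using assms by simp
  have d2: "Dsh q (Suc (Suc n)) \<ge> 1" using Dsh_ge1[of q n] assms by blast
  have "Dsh q (Suc (Suc (Suc n))) = int (q (Suc n)) * Dsh q (Suc (Suc n)) + Dsh q (Suc n)" by (simp only: Dsh.simps)
  moreover have "int (q (Suc n)) * Dsh q (Suc (Suc n)) \<ge> 1 * 1"
    using q1 d2 by (intro mult_mono) auto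
  ultimately have "Dsh q (Suc (Suc (Suc n))) \<ge> Dsh q (Suc n) + 1" by linarith
  moreover have "int n \<le> 2 * Dsh q (Suc n) + 1" "int (Suc n) \<le> 2 * Dsh q (Suc (Suc n)) + 1"
    using Suc.IH by blast+
  ultimately show ?case by simp
qed

lemma cf_irrat: "x \<notin> \<rat> \<Longrightarrow> cf_rem x n \<notin> \<rat>"
proof (induction n)
  case 0 then show ?case by simp
next
  case (Suc n)
  define y where "y = cf_rem x n"
  show ?case
  proof
    assume "cf_rem x (Suc n) \<in> \<rat>"
    then have "1 / (y - of_int \<lfloor>y\<rfloor>) \<in> \<rat>" by (simp add: y_def)
    then have "1 / (1 / (y - of_int \<lfloor>y\<rfloor>)) \<in> \<rat>" by (rule Rats_divide[OF Rats_1])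
    then have "y - of_int \<lfloor>y\<rfloor> \<in> \<rat>" by simp
    then have "y - of_int \<lfloor>y\<rfloor> + of_int \<lfloor>y\<rfloor> \<in> \<rat>" by (intro Rats_add) auto
    then have "y \<in> \<rat>" by simp
    then show False using Suc by (simp add: y_def)
  qed
qed

lemma theta_cf:
  assumes "arctan u0 > 0" "arctan u1 > 0" "(arctan u0 / arctan u1) \<notin> \<rat>"
    and q: "q = cf_q (arctan u0 / arctan u1)"
  shows "theta u0 u1 q (Suc n) > 0 \<and> theta u0 u1 q n > 0 \<and>
         cf_rem (arctan u0 / arctan u1) n = theta u0 u1 q n / theta u0 u1 q (Suc n)"
proof (induction n)
  case 0 then show ?case using assms by simp
next
  case (Suc n)
  define \<alpha> where "\<alpha> = arctan u0 / arctan u1"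
  define y where "y = cf_rem \<alpha> n"
  define t where "t = theta u0 u1 q"
  have y: "y = t n / t (Suc n)" "t n > 0" "t (Suc n) > 0"
    using Suc by (simp_all add: y_def \<alpha>_def t_def)
  have ypos: "y > 0" using y by simp
  have yirr: "y \<notin> \<rat>" using cf_irrat assms(3) by (simp add: y_def \<alpha>_def)
  have fl: "of_int \<lfloor>y\<rfloor> \<le> y" by simp
  have ne: "y \<noteq> of_int \<lfloor>y\<rfloor>" using yirr by (metis Rats_of_int)
  have fpos: "y - of_int \<lfloor>y\<rfloor> > 0" using fl ne by linarith
  have qn: "real (q n) = of_int \<lfloor>y\<rfloor>"
    using ypos by (simp add: q cf_q_def y_def \<alpha>_def)
  have t2: "t (Suc (Suc n)) = t (Suc n) * (y - of_int \<lfloor>y\<rfloor>)"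
  proof -
    have "t (Suc (Suc n)) = t n - real (q n) * t (Suc n)" by (simp add: t_def)
    moreover have "t n = y * t (Suc n)" using y by simp
    ultimately show ?thesis unfolding qn by (simp add: algebra_simps)
  qed
  have t2pos: "t (Suc (Suc n)) > 0" using t2 y fpos by simp
  have "cf_rem \<alpha> (Suc n) = 1 / (y - of_int \<lfloor>y\<rfloor>)" by (simp add: y_def)
  also have "\<dots> = t (Suc n) / t (Suc (Suc n))" using t2 y by simp
  finally show ?case using t2pos y by (simp add: t_def \<alpha>_def)
qed

lemma no3: "3 * (x::int) \<noteq> -1" by presburger

lemma int_sq3: fixes a b :: int assumes "a^2 = 3 * b^2" "coprime a b" shows False
proof -
  obtain c r where cr: "a = 3*c + r" "0 \<le> r" "r < 3"
    by (metis add.commute div_mod_decomp_int pos_mod_bound pos_mod_sign zero_less_numeral mult.commute)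
  have "r = 0 \<or> r = 1 \<or> r = 2" using cr by auto
  moreover have "r \<noteq> 1"
  proof
    assume "r = 1"
    then have "3 * (3*c^2 + 2*c - b^2) = -1" using assms(1) cr(1) by (simp add: power2_eq_square algebra_simps)
    then show False using no3 by blast
  qed
  moreover have "r \<noteq> 2"
  proof
    assume "r = 2"
    then have "3 * (3*c^2 + 4*c + 1 - b^2) = -1" using assms(1) cr(1) by (simp add: power2_eq_square algebra_simps)
    then show False using no3 by blast
  qed
  ultimately have r0: "r = 0" by blast
  then have "b^2 = 3 * c^2" using assms(1) cr(1) by (simp add: power2_eq_square algebra_simps)
  obtain d s where ds: "b = 3*d + s" "0 \<le> s" "s < 3"
    by (metis add.commute div_mod_decomp_int pos_mod_bound pos_mod_sign zero_less_numeral mult.commute)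
  have "s = 0 \<or> s = 1 \<or> s = 2" using ds by auto
  moreover have "s \<noteq> 1"
  proof
    assume "s = 1"
    then have "3 * (3*d^2 + 2*d - c^2) = -1" using \<open>b^2 = 3 * c^2\<close> ds(1) by (simp add: power2_eq_square algebra_simps)
    then show False using no3 by blast
  qed
  moreover have "s \<noteq> 2"
  proof
    assume "s = 2"
    then have "3 * (3*d^2 + 4*d + 1 - c^2) = -1" using \<open>b^2 = 3 * c^2\<close> ds(1) by (simp add: power2_eq_square algebra_simps)
    then show False using no3 by blast
  qed
  ultimately have "s = 0" by blast
  then have "3 dvd a" "3 dvd b" using cr ds r0 by auto
  then have "is_unit (3::int)" using assms(2) coprime_common_divisor by blast
  then show False by simp
qed

lemma rat_sq3: fixes u :: real assumes "u \<in> \<rat>" shows "u^2 \<noteq> 3"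
proof
  assume h: "u^2 = 3"
  obtain a b where ab: "b > 0" "coprime a b" "u = of_int a / of_int b" using Rats_cases'[OF assms] by blast
  then have "real_of_int a = u * of_int b" by simp
  then have "real_of_int a ^2 = 3 * real_of_int b ^2" using h by (simp add: power_mult_distrib)
  then have "a^2 = 3*b^2" by (metis (mono_tags) of_int_eq_iff of_int_mult of_int_numeral of_int_power)
  then show False using int_sq3 ab(2) by blast
qed

fun ee :: "int \<Rightarrow> int \<Rightarrow> nat \<Rightarrow> int" where
  "ee p q 0 = 2" | "ee p q (Suc 0) = p"
| "ee p q (Suc (Suc n)) = p * ee p q (Suc n) - q^2 * ee p q n"

lemma cos_rec: "cos (real (Suc (Suc n)) * x) = 2 * cos x * cos (real (Suc n) * x) - cos (real n * x)"
proof -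
  have a: "real (Suc (Suc n)) * x = real (Suc n) * x + x" by (simp add: algebra_simps)
  have b: "real n * x = real (Suc n) * x - x" by (simp add: algebra_simps)
  show ?thesis unfolding a b cos_add cos_diff by (simp add: algebra_simps)
qed

lemma ee_real:
  assumes "q > 0" "2 * cos x = of_int p / of_int q"
  shows "real_of_int (ee p q n) = of_int q ^ n * (2 * cos (real n * x))
     \<and> real_of_int (ee p q (Suc n)) = of_int q ^ Suc n * (2 * cos (real (Suc n) * x))"
proof (induction n)
  case 0
  have "of_int q * (2 * cos x) = of_int p" using assms by (simp add: field_simps)
  then show ?case by simp
next
  case (Suc n)
  have pq: "of_int p = of_int q * (2 * cos x)" using assms by (simp add: field_simps)
  have "real_of_int (ee p q (Suc (Suc n))) = of_int p * (of_int q ^ Suc n * (2 * cos (real (Suc n) * x)))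
      - of_int q ^ 2 * (of_int q ^ n * (2 * cos (real n * x)))"
    using Suc by simp
  also have "\<dots> = of_int q ^ Suc (Suc n) * (2 * cos (real (Suc (Suc n)) * x))"
    unfolding cos_rec pq by (simp add: algebra_simps power2_eq_square)
  finally show ?case using Suc by simp
qed

lemma ee_dvd: "q dvd (ee p q (Suc n) - p ^ Suc n)"
proof (induction n)
  case 0 then show ?case by simp
next
  case (Suc n)
  have "ee p q (Suc (Suc n)) - p ^ Suc (Suc n) = p * (ee p q (Suc n) - p ^ Suc n) - q * (q * ee p q n)"
    by (simp add: power2_eq_square algebra_simps)
  then show ?case using Suc by simp
qed

lemma niven_cos:
  assumes "2 * cos x \<in> \<rat>" "N > 0" "cos (real N * x) = 1"
  shows "2 * cos x \<in> \<int>"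
proof -
  obtain p q where pq: "q > 0" "coprime p q" "2 * cos x = of_int p / of_int q"
    using Rats_cases'[OF assms(1)] by blast
  obtain n where n: "N = Suc n" using assms(2) gr0_implies_Suc by blast
  have "real_of_int (ee p q N) = of_int q ^ N * 2" using ee_real[OF pq(1) pq(3), of n] n assms(3) by simp
  then have e: "ee p q N = q ^ N * 2" by (metis of_int_eq_iff of_int_mult of_int_numeral of_int_power)
  have "q dvd ee p q N - p ^ N" using ee_dvd n by simp
  moreover have "q dvd ee p q N" using e n by simp
  ultimately have "q dvd p ^ N" by (metis dvd_diff_commute dvd_add_right_iff diff_add_cancel)
  moreover have "coprime (p ^ N) q" using pq(2) by simp
  ultimately have "is_unit q" using coprime_common_divisor[of "p ^ N" q q] by simp
  then have "q = 1" using pq(1) by simp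
  then show ?thesis using pq(3) by simp
qed

lemma arctan_rat_pi:
  fixes u :: real and k m :: int
  assumes "u \<in> \<rat>" "u > 0" "arctan u * of_int m = of_int k * pi" "m \<noteq> 0"
  shows "u = 1"
proof -
  define x where "x = 2 * arctan u"
  have c1: "cos (arctan u) ^ 2 = 1 / (1 + u^2)"
    unfolding cos_arctan by (simp add: power_divide add_pos_nonneg)
  have cx: "2 * cos x = 2 * (2 / (1 + u^2) - 1)"
    unfolding x_def cos_double_cos c1 by simp
  have "2 * cos x \<in> \<rat>" unfolding cx using assms(1) by simp
  moreover have "cos (real (nat \<bar>m\<bar>) * x) = 1"
  proof -
    have "real (nat \<bar>m\<bar>) * x = 2 * pi * of_int (sgn m * k)"
    proof (cases "m > 0")
      case True
      then show ?thesis unfolding x_def using assms(3) by (simp add: algebra_simps)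
    next
      case False
      then have "m < 0" using assms(4) by simp
      then show ?thesis unfolding x_def using assms(3) by (simp add: algebra_simps)
    qed
    moreover have "cos (2 * pi * of_int (sgn m * k)) = 1" by (rule cos_int_2pin)
    ultimately show ?thesis by (simp only:)
  qed
  moreover have "nat \<bar>m\<bar> > 0" using assms(4) by simp
  ultimately have "2 * cos x \<in> \<int>" using niven_cos by blast
  then obtain z where z: "2 * cos x = of_int z" by (metis Ints_cases)
  have "\<bar>cos x\<bar> \<le> 1" by (rule abs_cos_le_one)
  then have "\<bar>2 * cos x\<bar> \<le> 2" by (simp add: abs_mult)
  then have "\<bar>z\<bar> \<le> 2" using z by linarith
  then have zc: "z = -2 \<or> z = -1 \<or> z = 0 \<or> z = 1 \<or> z = 2" by auto
  have pos: "1 + u^2 > 0" by (simp add: add_pos_nonneg)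
  have eq: "2 * (2 - (1 + u^2)) = of_int z * (1 + u^2)"
    using z cx pos by (simp add: field_simps)
  have r1: "(1/u) \<in> \<rat>" using assms(1) by simp
  from zc show ?thesis
  proof (elim disjE)
    assume "z = -2" then show ?thesis using eq by simp
  next
    assume "z = -1" then have "u^2 = 3" using eq by simp
    then show ?thesis using rat_sq3 assms(1) by blast
  next
    assume "z = 0" then have "u^2 = 1" using eq by simp
    then show ?thesis using assms(2) by (simp add: power2_eq_1_iff)
  next
    assume "z = 1" then have "3 * u^2 = 1" using eq by simp
    then have "(1/u)^2 = 3" using assms(2) by (simp add: field_simps)
    then show ?thesis using rat_sq3 r1 by blast
  next
    assume "z = 2" then have "u^2 = 0" using eq by simp
    then show ?thesis using assms(2) by simp
  qed
qed

lemma tan_cubic: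
  obtains C where "C > 0" "eventually (\<lambda>x. \<bar>tan x - x\<bar> \<le> C * \<bar>x ^ 3\<bar>) (at_right (0::real))"
proof -
  have "(\<lambda>x::real. tan x - x) \<in> O[at_right 0](\<lambda>x. x^3)"
    unfolding tan_def by real_asymp
  then obtain C where "C > 0" "eventually (\<lambda>x. norm (tan x - x) \<le> C * norm (x ^ 3)) (at_right (0::real))"
    by (elim landau_o.bigE) blast
  then show ?thesis using that by auto
qed

lemma lim_aux: "(\<lambda>n::nat. 2 * c / (real n - 1)) \<longlonglongrightarrow> (0::real)"
  by real_asymp

theorem corollary3:
  fixes a0 a1 :: int and u0 u1 :: real
  assumes "u0 \<in> \<rat>" and "u1 \<in> \<rat>"
    and "u0 > u1" and "u1 > 0"
    and "real_of_int a0 * arctan u0 + real_of_int a1 * arctan u1 = pi / 4"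
  defines "q \<equiv> cf_q (arctan u0 / arctan u1)"
  shows "((\<lambda>n. real_of_int (aneg a0 a1 q (Suc n)) * useq u0 u1 q n
               + real_of_int (aneg a0 a1 q n) * useq u0 u1 q (Suc n) - pi / 4)
           \<in> O(\<lambda>n. 1 / (real_of_int (Dsh q (Suc n)))\<^sup>2)
       \<and> (\<lambda>n. real_of_int (aneg a0 a1 q (Suc n)) * useq u0 u1 q n
               + real_of_int (aneg a0 a1 q n) * useq u0 u1 q (Suc n)) \<longlonglongrightarrow> pi / 4)"
proof -
  define t where "t = theta u0 u1 q"
  define \<alpha> where "\<alpha> = arctan u0 / arctan u1"
  have t0: "t 0 = arctan u0" and t1: "t 1 = arctan u1" by (simp_all add: t_def)
  have th1pos: "arctan u1 > 0" using assms(4) by (simp add: arctan_less_iff[of 0, simplified])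
  have th01: "arctan u1 < arctan u0" using assms(3) by (simp add: arctan_less_iff)
  have th0pos: "arctan u0 > 0" using th1pos th01 by linarith
  have \<alpha>gt1: "\<alpha> > 1" using th1pos th01 by (simp add: \<alpha>_def)
  have irr: "\<alpha> \<notin> \<rat>"
  proof
    assume "\<alpha> \<in> \<rat>"
    then obtain s p where sp: "p > 0" "\<alpha> = of_int s / of_int p" using Rats_cases' by metis
    have e1: "arctan u0 * of_int p = of_int s * arctan u1"
      using sp th1pos by (simp add: \<alpha>_def field_simps)
    define m where "m = 4 * (a0 * s + a1 * p)"
    have e2: "arctan u1 * of_int m = of_int p * pi"
    proof -
      have "of_int p * pi = of_int p * (4 * (real_of_int a0 * arctan u0 + real_of_int a1 * arctan u1))"
        using assms(5) by simp
      also have "\<dots> = 4 * (of_int a0 * (arctan u0 * of_int p) + of_int a1 * of_int p * arctan u1)"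
        by (simp add: algebra_simps)
      also have "\<dots> = arctan u1 * of_int m" unfolding e1 m_def by (simp add: algebra_simps)
      finally show ?thesis by simp
    qed
    have m0: "m \<noteq> 0"
    proof
      assume "m = 0"
      then have "of_int p * pi = 0" using e2 by simp
      then show False using sp(1) by simp
    qed
    have u1: "u1 = 1" using arctan_rat_pi[OF assms(2) assms(4) e2 m0] .
    have e3: "arctan u0 * of_int (p * m) = of_int (s * p) * pi"
    proof -
      have "arctan u0 * of_int (p * m) = (arctan u0 * of_int p) * of_int m" by simp
      also have "\<dots> = of_int s * (arctan u1 * of_int m)" unfolding e1 by simp
      also have "\<dots> = of_int (s * p) * pi" unfolding e2 by simp
      finally show ?thesis .
    qed
    have "p * m \<noteq> 0" using sp(1) m0 by simp
    then have "u0 = 1" using arctan_rat_pi[OF assms(1) _ e3] assms(3) assms(4) by simp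
    then show False using assms(3) u1 by simp
  qed
  have H: "t (Suc n) > 0 \<and> t n > 0 \<and> cf_rem \<alpha> n = t n / t (Suc n)" for n
    using theta_cf[OF th0pos th1pos irr[unfolded \<alpha>_def] q_def[THEN meta_eq_to_obj_eq]]
    by (simp add: t_def \<alpha>_def)
  have tpos: "t n > 0" for n using H by blast
  have qdef: "q k = nat \<lfloor>cf_rem \<alpha> k\<rfloor>" for k by (simp add: q_def cf_q_def \<alpha>_def)
  have qge: "q k \<ge> 1" if "k \<ge> 1" for k
  proof -
    obtain j where j: "k = Suc j" using \<open>k \<ge> 1\<close> by (metis One_nat_def Suc_le_D)
    define y where "y = cf_rem \<alpha> j"
    have "y \<notin> \<rat>" using cf_irrat[OF irr] by (simp add: y_def)
    then have ne: "y \<noteq> of_int \<lfloor>y\<rfloor>" by (metis Rats_of_int)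
    have f: "0 < y - of_int \<lfloor>y\<rfloor>" "y - of_int \<lfloor>y\<rfloor> < 1" using ne by linarith+
    have "cf_rem \<alpha> k = 1 / (y - of_int \<lfloor>y\<rfloor>)" by (simp add: j y_def)
    moreover have "1 / (y - of_int \<lfloor>y\<rfloor>) > 1" using f by simp
    ultimately have "cf_rem \<alpha> k \<ge> 1" by simp
    then show ?thesis unfolding qdef by linarith
  qed
  have tmono: "t (Suc n) \<le> t n" for n
  proof -
    have "cf_rem \<alpha> n \<ge> 1"
    proof (cases n)
      case 0 then show ?thesis using \<alpha>gt1 by simp
    next
      case (Suc j)
      define y where "y = cf_rem \<alpha> j"
      have "y \<notin> \<rat>" using cf_irrat[OF irr] by (simp add: y_def)
      then have ne: "y \<noteq> of_int \<lfloor>y\<rfloor>" by (metis Rats_of_int)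
      have f: "0 < y - of_int \<lfloor>y\<rfloor>" "y - of_int \<lfloor>y\<rfloor> < 1" using ne by linarith+
      have "cf_rem \<alpha> n = 1 / (y - of_int \<lfloor>y\<rfloor>)" by (simp add: Suc y_def)
      moreover have "1 / (y - of_int \<lfloor>y\<rfloor>) > 1" using f by simp
      ultimately show ?thesis by simp
    qed
    then have "t n / t (Suc n) \<ge> 1" using H by simp
    then show ?thesis using tpos[of "Suc n"] by (simp add: field_simps)
  qed
  have invD: "real_of_int (Dsh q (Suc n)) * t n + real_of_int (Dsh q n) * t (Suc n) = arctan u1" for n
    using pair_inv[of "\<lambda>k. real_of_int (Dsh q k)" q n u0 u1] by (simp add: t_def)
  have invN: "real_of_int (Nsh q (Suc n)) * t n + real_of_int (Nsh q n) * t (Suc n) = arctan u0" for n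
    using pair_inv[of "\<lambda>k. real_of_int (Nsh q k)" q n u0 u1] by (simp add: t_def)
  have invA: "real_of_int (aneg a0 a1 q (Suc n)) * t n + real_of_int (aneg a0 a1 q n) * t (Suc n) = pi / 4" for n
    using pair_inv[of "\<lambda>k. real_of_int (aneg a0 a1 q k)" q n u0 u1] assms(5) by (simp add: t_def)
  have Dnn: "Dsh q k \<ge> 0" for k using Dsh_nonneg by blast
  have Nnn: "Nsh q k \<ge> 0" for k using Nsh_nonneg by blast
  define K where "K = \<bar>real_of_int a1\<bar> * arctan u1 + \<bar>real_of_int a0\<bar> * arctan u0"
  have Kpos: "K \<ge> 0" using th0pos th1pos by (simp add: K_def)
  have abs_aneg: "\<bar>real_of_int (aneg a0 a1 q k)\<bar> \<le> \<bar>real_of_int a1\<bar> * of_int (Dsh q k) + \<bar>real_of_int a0\<bar> * of_int (Nsh q k)" for k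
  proof -
    have "aneg a0 a1 q k = a1 * Dsh q k + a0 * Nsh q k" using aneg_decomp by blast
    then have "real_of_int (aneg a0 a1 q k) = of_int a1 * of_int (Dsh q k) + of_int a0 * of_int (Nsh q k)" by simp
    then have "\<bar>real_of_int (aneg a0 a1 q k)\<bar> \<le> \<bar>of_int a1 * of_int (Dsh q k)\<bar> + \<bar>(of_int a0 :: real) * of_int (Nsh q k)\<bar>"
      by (simp only: abs_triangle_ineq)
    also have "\<dots> = \<bar>real_of_int a1\<bar> * of_int (Dsh q k) + \<bar>real_of_int a0\<bar> * of_int (Nsh q k)"
      using Dnn[of k] Nnn[of k] by (simp add: abs_mult)
    finally show ?thesis .
  qed
  have DtA: "real_of_int (Dsh q (Suc n)) * t n \<le> arctan u1" for n
  proof -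
    have "0 \<le> real_of_int (Dsh q n) * t (Suc n)"
      using Dnn Nnn tpos by (simp add: less_imp_le)
    then show ?thesis using invD[of n] by linarith
  qed
  have DtB: "real_of_int (Dsh q n) * t (Suc n) \<le> arctan u1" for n
  proof -
    have "0 \<le> real_of_int (Dsh q (Suc n)) * t n"
      using Dnn Nnn tpos by (simp add: less_imp_le)
    then show ?thesis using invD[of n] by linarith
  qed
  have NtA: "real_of_int (Nsh q (Suc n)) * t n \<le> arctan u0" for n
  proof -
    have "0 \<le> real_of_int (Nsh q n) * t (Suc n)"
      using Dnn Nnn tpos by (simp add: less_imp_le)
    then show ?thesis using invN[of n] by linarith
  qed
  have NtB: "real_of_int (Nsh q n) * t (Suc n) \<le> arctan u0" for n
  proof -
    have "0 \<le> real_of_int (Nsh q (Suc n)) * t n"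
      using Dnn Nnn tpos by (simp add: less_imp_le)
    then show ?thesis using invN[of n] by linarith
  qed
  have KA: "\<bar>real_of_int (aneg a0 a1 q (Suc n))\<bar> * t n \<le> K" for n
  proof -
    have "\<bar>real_of_int (aneg a0 a1 q (Suc n))\<bar> * t n \<le>
       (\<bar>real_of_int a1\<bar> * of_int (Dsh q (Suc n)) + \<bar>real_of_int a0\<bar> * of_int (Nsh q (Suc n))) * t n"
      using abs_aneg tpos by (intro mult_right_mono) (auto intro: less_imp_le)
    also have "\<dots> = \<bar>real_of_int a1\<bar> * (of_int (Dsh q (Suc n)) * t n) + \<bar>real_of_int a0\<bar> * (of_int (Nsh q (Suc n)) * t n)"
      by (simp add: algebra_simps)
    also have "\<dots> \<le> K" unfolding K_def using DtA[of n] NtA[of n]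
      by (intro add_mono mult_left_mono) auto
    finally show ?thesis .
  qed
  have KB: "\<bar>real_of_int (aneg a0 a1 q n)\<bar> * t (Suc n) \<le> K" for n
  proof -
    have "\<bar>real_of_int (aneg a0 a1 q n)\<bar> * t (Suc n) \<le>
       (\<bar>real_of_int a1\<bar> * of_int (Dsh q n) + \<bar>real_of_int a0\<bar> * of_int (Nsh q n)) * t (Suc n)"
      using abs_aneg tpos by (intro mult_right_mono) (auto intro: less_imp_le)
    also have "\<dots> = \<bar>real_of_int a1\<bar> * (of_int (Dsh q n) * t (Suc n)) + \<bar>real_of_int a0\<bar> * (of_int (Nsh q n) * t (Suc n))"
      by (simp add: algebra_simps)
    also have "\<dots> \<le> K" unfolding K_def using DtB[of n] NtB[of n]
      by (intro add_mono mult_left_mono) auto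
    finally show ?thesis .
  qed
  have Dge1: "Dsh q (Suc n) \<ge> 1" if "n \<ge> 1" for n
  proof -
    obtain j where "n = Suc j" using \<open>n \<ge> 1\<close> by (metis One_nat_def Suc_le_D)
    then show ?thesis using Dsh_ge1[of q j] qge by auto
  qed
  have Dlin: "real n \<le> 2 * real_of_int (Dsh q (Suc n)) + 1" for n
  proof -
    have "int n \<le> 2 * Dsh q (Suc n) + 1" using Dsh_lin[of q n] qge by blast
    then show ?thesis by linarith
  qed
  have tbound: "t n \<le> arctan u1 / real_of_int (Dsh q (Suc n))" if "n \<ge> 1" for n
    using DtA[of n] Dge1[OF that] by (simp add: field_simps)
  have tlim: "t \<longlonglongrightarrow> 0"
  proof (rule tendsto_sandwich[of "\<lambda>_. 0" _ _ "\<lambda>n. 2 * arctan u1 / (real n - 1)"])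
    show "eventually (\<lambda>n. 0 \<le> t n) sequentially" using tpos by (simp add: less_imp_le)
    show "eventually (\<lambda>n. t n \<le> 2 * arctan u1 / (real n - 1)) sequentially"
      unfolding eventually_sequentially
    proof (intro exI allI impI)
      fix n :: nat assume n: "n \<ge> 2"
      have D1: "real_of_int (Dsh q (Suc n)) \<ge> 1" using Dge1[of n] n by simp
      have "t n \<le> arctan u1 / real_of_int (Dsh q (Suc n))" using tbound n by simp
      also have "\<dots> \<le> arctan u1 / ((real n - 1) / 2)"
        using Dlin[of n] n th1pos by (intro divide_left_mono) auto
      also have "\<dots> = 2 * arctan u1 / (real n - 1)" by simp
      finally show "t n \<le> 2 * arctan u1 / (real n - 1)" .
    qed
    show "(\<lambda>_. 0) \<longlonglongrightarrow> (0::real)" by simp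
    show "(\<lambda>n. 2 * arctan u1 / (real n - 1)) \<longlonglongrightarrow> 0" by (rule lim_aux)
  qed
  have tlim1: "(\<lambda>n. t (Suc n)) \<longlonglongrightarrow> 0" using tlim by (rule LIMSEQ_Suc)
  obtain C where C: "C > 0" "eventually (\<lambda>x. \<bar>tan x - x\<bar> \<le> C * \<bar>x ^ 3\<bar>) (at_right (0::real))"
    using tan_cubic by blast
  have fl0: "filterlim t (at_right 0) sequentially"
    using tlim tpos by (intro tendsto_imp_filterlim_at_right) auto
  have fl1: "filterlim (\<lambda>n. t (Suc n)) (at_right 0) sequentially"
    using tlim1 tpos by (intro tendsto_imp_filterlim_at_right) auto
  have ev0: "eventually (\<lambda>n. \<bar>tan (t n) - t n\<bar> \<le> C * \<bar>t n ^ 3\<bar>) sequentially"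
    using filterlim_iff[THEN iffD1, OF fl0, rule_format, OF C(2)] by simp
  have ev1: "eventually (\<lambda>n. \<bar>tan (t (Suc n)) - t (Suc n)\<bar> \<le> C * \<bar>t (Suc n) ^ 3\<bar>) sequentially"
    using filterlim_iff[THEN iffD1, OF fl1, rule_format, OF C(2)] by simp
  define E where "E n = real_of_int (aneg a0 a1 q (Suc n)) * useq u0 u1 q n
               + real_of_int (aneg a0 a1 q n) * useq u0 u1 q (Suc n) - pi / 4" for n
  have Eeq: "E n = real_of_int (aneg a0 a1 q (Suc n)) * (tan (t n) - t n)
                 + real_of_int (aneg a0 a1 q n) * (tan (t (Suc n)) - t (Suc n))" for n
    using invA[of n] by (simp add: E_def useq_def t_def algebra_simps)
  have Ebound: "eventually (\<lambda>n. \<bar>E n\<bar> \<le> 2 * C * K * t n ^ 2) sequentially"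
    using ev0 ev1
  proof eventually_elim
    case (elim n)
    let ?A = "real_of_int (aneg a0 a1 q (Suc n))" and ?B = "real_of_int (aneg a0 a1 q n)"
    have tp: "t n > 0" "t (Suc n) > 0" using tpos by auto
    have "\<bar>E n\<bar> \<le> \<bar>?A\<bar> * \<bar>tan (t n) - t n\<bar> + \<bar>?B\<bar> * \<bar>tan (t (Suc n)) - t (Suc n)\<bar>"
      unfolding Eeq abs_mult[symmetric] by (rule abs_triangle_ineq)
    also have "\<dots> \<le> \<bar>?A\<bar> * (C * t n ^ 3) + \<bar>?B\<bar> * (C * t (Suc n) ^ 3)"
      using elim tp by (intro add_mono mult_left_mono) auto
    also have "\<dots> = C * ((\<bar>?A\<bar> * t n) * t n ^ 2) + C * ((\<bar>?B\<bar> * t (Suc n)) * t (Suc n) ^ 2)"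
      by (simp add: power3_eq_cube power2_eq_square algebra_simps)
    also have "\<dots> \<le> C * (K * t n ^ 2) + C * (K * t (Suc n) ^ 2)"
      using KA[of n] KB[of n] C(1) by (intro add_mono mult_left_mono mult_right_mono) auto
    also have "\<dots> \<le> C * (K * t n ^ 2) + C * (K * t n ^ 2)"
      using tmono[of n] tp C(1) Kpos by (intro add_mono mult_left_mono power_mono) auto
    also have "\<dots> = 2 * C * K * t n ^ 2" by simp
    finally show ?case .
  qed
  have part1: "E \<in> O(\<lambda>n. 1 / (real_of_int (Dsh q (Suc n)))\<^sup>2)"
  proof (rule bigoI[where c = "2 * C * K * arctan u1 ^ 2"])
    have "eventually (\<lambda>n. n \<ge> 1) sequentially" by (rule eventually_ge_at_top)
    then show "eventually (\<lambda>n. norm (E n) \<le> 2 * C * K * arctan u1 ^ 2 * norm (1 / (real_of_int (Dsh q (Suc n)))\<^sup>2)) sequentially"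
      using Ebound
    proof eventually_elim
      case (elim n)
      have D1: "real_of_int (Dsh q (Suc n)) \<ge> 1" using Dge1 elim(1) by simp
      have "t n ^ 2 \<le> (arctan u1 / real_of_int (Dsh q (Suc n))) ^ 2"
        using tbound[OF elim(1)] tpos[of n] by (intro power_mono) auto
      also have "\<dots> = arctan u1 ^ 2 * (1 / (real_of_int (Dsh q (Suc n)))\<^sup>2)"
        by (simp add: power_divide)
      finally have "t n ^ 2 \<le> arctan u1 ^ 2 * (1 / (real_of_int (Dsh q (Suc n)))\<^sup>2)" .
      then have "2 * C * K * t n ^ 2 \<le> 2 * C * K * (arctan u1 ^ 2 * (1 / (real_of_int (Dsh q (Suc n)))\<^sup>2))"
        using C(1) Kpos by (intro mult_left_mono) auto
      also have "\<dots> = 2 * C * K * arctan u1 ^ 2 * (1 / (real_of_int (Dsh q (Suc n)))\<^sup>2)"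
        by (simp only: mult.assoc)
      finally have fin: "2 * C * K * t n ^ 2 \<le> 2 * C * K * arctan u1 ^ 2 * (1 / (real_of_int (Dsh q (Suc n)))\<^sup>2)" .
      have nE: "norm (E n) = \<bar>E n\<bar>" by (simp only: real_norm_def)
      have nD: "norm (1 / (real_of_int (Dsh q (Suc n)))\<^sup>2) = 1 / (real_of_int (Dsh q (Suc n)))\<^sup>2"
        using D1 by simp
      show ?case unfolding nE nD using elim(2) fin by linarith
    qed
  qed
  have part2: "(\<lambda>n. E n + pi / 4) \<longlonglongrightarrow> pi / 4"
  proof -
    have t2: "(\<lambda>n. t n ^ 2) \<longlonglongrightarrow> 0 ^ 2" by (rule tendsto_power[OF tlim])
    have l: "(\<lambda>n. 2 * C * K * t n ^ 2) \<longlonglongrightarrow> 0"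
      using tendsto_mult_right_zero[OF t2[unfolded power_zero_numeral], of "2 * C * K"] by simp
    have ev: "eventually (\<lambda>n. norm (E n) \<le> 2 * C * K * t n ^ 2) sequentially"
      using Ebound by (simp only: real_norm_def)
    have "E \<longlonglongrightarrow> 0" by (rule Lim_null_comparison[OF ev l])
    from tendsto_add[OF this tendsto_const[of "pi / 4"]] show ?thesis by simp
  qed
  show ?thesis using part1 part2 unfolding E_def by simp
qed
end
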